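(* Let $b_s$ be a finite bridge. Then $\mathscr{D}(b_s)=\mathrm{llip}(b_s)$, where $\mathrm{llip}(f)=\sup\{\kappa\in[0,\infty): \forall y,z\in[0,1],\ |f(y)-f(z)|\ge\kappa|y-z|\}$.
   Context: Let $\mathcal{P}_{\mathcal{M}}$ be the set of sequences $s=(s_i)_{i\ge1}$ with $s_1\ge s_2\ge\dots\ge0$ and $\sum_i s_i\le1$; put $s_0=1-\sum_i s_i$. Given $s\in\mathcal{P}_{\mathcal{M}}$ and i.i.d. uniform $[0,1]$ random variables $(U_i)$ independent of $s$, the $s$-bridge is $b_s(y)=s_0y+\sum_{i\ge1}s_i\mathbf{1}\{U_i\le y\}$. It is a finite bridge if only finitely many $s_i$ are nonzero. For increasing $f$, $f^{-1}(y)=\inf\{z:f(z)>y\}$. The paintbox partition of $b_s$: with $(V_i)$ i.i.d. uniform independent of everything, $i\sim j$ iff $b_s^{-1}(V_i)=b_s^{-1}(V_j)$; this is an exchangeable partition $\pi$ of $\mathbb{N}$. $\mathscr{D}(b_s)$ denotes the dust of this partition, $\mathscr{D}(\pi)=1-\sum_{b\in\pi}\mathrm{freq}(b)$, where $\mathrm{freq}(b)=\lim_k|b\cap\{1,\dots,k\}|/k$ is the asymptotic frequency of a block $b$. *)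

theory Defs
  imports "HOL-Probability.Probability"
begin

text \<open>The s-bridge. The paper's sequence (s_i)_{i>=1} is encoded as p with p i = s_(i+1);
  s_0 = 1 - sum of the p i. u i plays the role of U_(i+1).\<close>
definition bridge :: "(nat \<Rightarrow> real) \<Rightarrow> (nat \<Rightarrow> real) \<Rightarrow> real \<Rightarrow> real" where
  "bridge p u y = (1 - (\<Sum>i. p i)) * y + (\<Sum>i. p i * indicator {..y} (u i))"

definition gen_inv :: "(real \<Rightarrow> real) \<Rightarrow> real \<Rightarrow> real" where
  "gen_inv f y = Inf {z \<in> {0..1}. f z > y}"

definition asym_freq :: "nat set \<Rightarrow> real" where
  "asym_freq B = lim (\<lambda>k. real (card (B \<inter> {1..k})) / real k)"

definition paintbox_partition :: "(real \<Rightarrow> real) \<Rightarrow> (nat \<Rightarrow> real) \<Rightarrow> nat set set" where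
  "paintbox_partition f v =
     {{j. j \<ge> 1 \<and> gen_inv f (v j) = gen_inv f (v i)} | i. i \<ge> 1}"

definition dust :: "nat set set \<Rightarrow> real" where
  "dust P = 1 - (\<Sum>\<^sub>\<infinity> B\<in>P. asym_freq B)"

definition llip :: "(real \<Rightarrow> real) \<Rightarrow> real" where
  "llip f = Sup {\<kappa>. \<kappa> \<ge> 0 \<and> (\<forall>y\<in>{0..1}. \<forall>z\<in>{0..1}. \<bar>f y - f z\<bar> \<ge> \<kappa> * \<bar>y - z\<bar>)}"

end

theory Submission
  imports Defs
begin

lemma gap_right:
  fixes A :: "real set"
  assumes "finite A"
  shows "\<exists>d>0. \<forall>a\<in>A. a > z \<longrightarrow> a > z + d"
  using assms
proof (induction rule: finite_induct)
  case empty then show ?case by (intro exI[of _ 1]) auto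
next
  case (insert x A)
  then obtain d where d: "d > 0" "\<forall>a\<in>A. a > z \<longrightarrow> a > z + d" by blast
  show ?case
  proof (cases "x > z")
    case True
    show ?thesis
    proof (intro exI[of _ "min d ((x - z)/2)"] conjI ballI impI)
      fix a assume "a \<in> insert x A" "a > z"
      then show "a > z + min d ((x - z)/2)" using d True by (cases "a = x") (auto simp: min_def field_simps)
    qed (use d True in auto)
  next
    case False
    show ?thesis using d False by (intro exI[of _ d]) auto
  qed
qed

lemma gap_left:
  fixes A :: "real set"
  assumes "finite A"
  shows "\<exists>d>0. \<forall>a\<in>A. a < z \<longrightarrow> a < z - d"
  using assms
proof (induction rule: finite_induct)
  case empty then show ?case by (intro exI[of _ 1]) auto
next
  case (insert x A)
  then obtain d where d: "d > 0" "\<forall>a\<in>A. a < z \<longrightarrow> a < z - d" by blast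
  show ?case
  proof (cases "x < z")
    case True
    show ?thesis
    proof (intro exI[of _ "min d ((z - x)/2)"] conjI ballI impI)
      fix a assume "a \<in> insert x A" "a < z"
      then show "a < z - min d ((z - x)/2)" using d True by (cases "a = x") (auto simp: min_def field_simps)
    qed (use d True in auto)
  next
    case False
    show ?thesis using d False by (intro exI[of _ d]) auto
  qed
qed

definition cnt :: "(nat \<Rightarrow> real) \<Rightarrow> real set \<Rightarrow> nat \<Rightarrow> real" where
  "cnt v S k = real (card {j\<in>{1..k}. v j \<in> S}) / real k"

lemma fin_cnt: "finite {j\<in>{1..k::nat}. P j}"
  by (rule finite_subset[of _ "{1..k}"]) auto

lemma cnt_mono: "S \<subseteq> T \<Longrightarrow> cnt v S k \<le> cnt v T k"
proof -
  assume "S \<subseteq> T"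
  then have "card {j\<in>{1..k}. v j \<in> S} \<le> card {j\<in>{1..k}. v j \<in> T}"
    by (intro card_mono fin_cnt) auto
  then show ?thesis unfolding cnt_def by (intro divide_right_mono) auto
qed

lemma cnt_Un: "S \<inter> T = {} \<Longrightarrow> cnt v (S \<union> T) k = cnt v S k + cnt v T k"
proof -
  assume "S \<inter> T = {}"
  then have "{j\<in>{1..k}. v j \<in> S \<union> T} = {j\<in>{1..k}. v j \<in> S} \<union> {j\<in>{1..k}. v j \<in> T}"
    "{j\<in>{1..k}. v j \<in> S} \<inter> {j\<in>{1..k}. v j \<in> T} = {}" by auto
  then show ?thesis unfolding cnt_def
    by (simp add: card_Un_disjoint add_divide_distrib)
qed

lemma clamp_lip:
  fixes a b :: real
  shows "a \<le> b \<Longrightarrow> max 0 (min a 1) \<le> max 0 (min b 1) \<and> max 0 (min b 1) - max 0 (min a 1) \<le> b - a"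
  by (auto simp: max_def min_def)

lemma emp_real:
  assumes H: "\<forall>q\<in>\<rat>. (\<lambda>k. cnt v {..<q} k) \<longlonglongrightarrow> max 0 (min q 1)"
  shows "(\<lambda>k. cnt v {..<x} k) \<longlonglongrightarrow> max 0 (min x 1)"
    and "(\<lambda>k. cnt v {..x} k) \<longlonglongrightarrow> max 0 (min x 1)"
proof -
  have main: "\<exists>no. \<forall>n\<ge>no. \<bar>cnt v {..<x} n - max 0 (min x 1)\<bar> < r \<and> \<bar>cnt v {..x} n - max 0 (min x 1)\<bar> < r"
    if r: "r > 0" for r
  proof -
    obtain q1 where q1: "q1 \<in> \<rat>" "x - r/2 < q1" "q1 < x" using Rats_dense_in_real[of "x - r/2" x] r by auto
    obtain q2 where q2: "q2 \<in> \<rat>" "x < q2" "q2 < x + r/2" using Rats_dense_in_real[of x "x + r/2"] r by auto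
    obtain n1 where n1: "\<forall>n\<ge>n1. norm (cnt v {..<q1} n - max 0 (min q1 1)) < r/2"
      using LIMSEQ_D[OF H[rule_format, OF q1(1)], of "r/2"] r by auto
    obtain n2 where n2: "\<forall>n\<ge>n2. norm (cnt v {..<q2} n - max 0 (min q2 1)) < r/2"
      using LIMSEQ_D[OF H[rule_format, OF q2(1)], of "r/2"] r by auto
    have c1: "max 0 (min x 1) - max 0 (min q1 1) \<le> x - q1" using clamp_lip[of q1 x] q1 by simp
    have c1': "max 0 (min q1 1) \<le> max 0 (min x 1)" using clamp_lip[of q1 x] q1 by simp
    have c2: "max 0 (min q2 1) - max 0 (min x 1) \<le> q2 - x" using clamp_lip[of x q2] q2 by simp
    have c2': "max 0 (min x 1) \<le> max 0 (min q2 1)" using clamp_lip[of x q2] q2 by simp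
    show ?thesis
    proof (intro exI[of _ "max n1 n2"] allI impI)
      fix n assume n: "n \<ge> max n1 n2"
      have a1: "\<bar>cnt v {..<q1} n - max 0 (min q1 1)\<bar> < r/2" using n1 n by auto
      have a2: "\<bar>cnt v {..<q2} n - max 0 (min q2 1)\<bar> < r/2" using n2 n by auto
      have m1: "cnt v {..<q1} n \<le> cnt v {..<x} n" using q1 by (intro cnt_mono) auto
      have m2: "cnt v {..<x} n \<le> cnt v {..x} n" by (intro cnt_mono) auto
      have m3: "cnt v {..x} n \<le> cnt v {..<q2} n" using q2 by (intro cnt_mono) auto
      show "\<bar>cnt v {..<x} n - max 0 (min x 1)\<bar> < r \<and> \<bar>cnt v {..x} n - max 0 (min x 1)\<bar> < r"
      proof -
        have h1: "cnt v {..<x} n - max 0 (min x 1) < r" using a2 m2 m3 c2 q2 unfolding abs_less_iff by linarith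
        have h2: "- r < cnt v {..<x} n - max 0 (min x 1)" using a1 m1 c1 q1 unfolding abs_less_iff by linarith
        have h3: "cnt v {..x} n - max 0 (min x 1) < r" using a2 m3 c2 q2 unfolding abs_less_iff by linarith
        have h4: "- r < cnt v {..x} n - max 0 (min x 1)" using a1 m1 m2 c1 q1 unfolding abs_less_iff by linarith
        show ?thesis unfolding abs_less_iff using h1 h2 h3 h4 by linarith
      qed
    qed
  qed
  show "(\<lambda>k. cnt v {..<x} k) \<longlonglongrightarrow> max 0 (min x 1)"
  proof (rule LIMSEQ_I)
    fix r :: real assume "r > 0"
    then show "\<exists>no. \<forall>n\<ge>no. norm (cnt v {..<x} n - max 0 (min x 1)) < r" using main by fastforce
  qed
  show "(\<lambda>k. cnt v {..x} k) \<longlonglongrightarrow> max 0 (min x 1)"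
  proof (rule LIMSEQ_I)
    fix r :: real assume "r > 0"
    then show "\<exists>no. \<forall>n\<ge>no. norm (cnt v {..x} n - max 0 (min x 1)) < r" using main by fastforce
  qed
qed

lemma freq_interval:
  assumes H: "\<forall>q\<in>\<rat>. (\<lambda>k. cnt v {..<q} k) \<longlonglongrightarrow> max 0 (min q 1)"
    and ab: "0 \<le> a" "a \<le> b" "b \<le> 1"
    and T1: "{j. j \<ge> 1 \<and> v j \<in> {a..<b}} \<subseteq> T" and T2: "T \<subseteq> {j. v j \<in> {a..b}}"
  shows "(\<lambda>k. real (card (T \<inter> {1..k})) / real k) \<longlonglongrightarrow> b - a"
proof (rule tendsto_sandwich)
  have e1: "cnt v {a..<b} k = cnt v {..<b} k - cnt v {..<a} k" for k
  proof -
    have eq: "{..<a} \<union> {a..<b} = {..<b}" using ab by auto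
    have dj: "{..<a} \<inter> {a..<b} = {}" by auto
    have "cnt v {..<b} k = cnt v {..<a} k + cnt v {a..<b} k"
      using cnt_Un[OF dj, of v k] unfolding eq .
    then show ?thesis by simp
  qed
  have e2: "cnt v {a..b} k = cnt v {..b} k - cnt v {..<a} k" for k
  proof -
    have eq: "{..<a} \<union> {a..b} = {..b}" using ab by auto
    have dj: "{..<a} \<inter> {a..b} = {}" by auto
    have "cnt v {..b} k = cnt v {..<a} k + cnt v {a..b} k"
      using cnt_Un[OF dj, of v k] unfolding eq .
    then show ?thesis by simp
  qed
  have cl: "max 0 (min b 1) - max 0 (min a 1) = b - a" using ab by (simp add: max_def min_def)
  show "(\<lambda>k. cnt v {a..<b} k) \<longlonglongrightarrow> b - a"
    unfolding e1 cl[symmetric] by (intro tendsto_diff emp_real[OF H])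
  show "(\<lambda>k. cnt v {a..b} k) \<longlonglongrightarrow> b - a"
    unfolding e2 cl[symmetric] by (intro tendsto_diff emp_real[OF H])
  show "\<forall>\<^sub>F k in sequentially. cnt v {a..<b} k \<le> real (card (T \<inter> {1..k})) / real k"
  proof (intro always_eventually allI)
    fix k
    have "{j\<in>{1..k}. v j \<in> {a..<b}} \<subseteq> T \<inter> {1..k}" using T1 by auto
    then have "card {j\<in>{1..k}. v j \<in> {a..<b}} \<le> card (T \<inter> {1..k})" by (intro card_mono) (simp_all add: Int_commute)
    then show "cnt v {a..<b} k \<le> real (card (T \<inter> {1..k})) / real k"
      unfolding cnt_def by (intro divide_right_mono) auto
  qed
  show "\<forall>\<^sub>F k in sequentially. real (card (T \<inter> {1..k})) / real k \<le> cnt v {a..b} k"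
  proof (intro always_eventually allI)
    fix k
    have "T \<inter> {1..k} \<subseteq> {j\<in>{1..k}. v j \<in> {a..b}}" using T2 by auto
    then have "card (T \<inter> {1..k}) \<le> card {j\<in>{1..k}. v j \<in> {a..b}}" by (intro card_mono fin_cnt)
    then show "real (card (T \<inter> {1..k})) / real k \<le> cnt v {a..b} k"
      unfolding cnt_def by (intro divide_right_mono) auto
  qed
qed


context
  fixes p u :: "nat \<Rightarrow> real"
  assumes p0: "\<forall>i. p i \<ge> 0" and ps: "(\<Sum>i. p i) \<le> 1" and finN: "finite {i. p i \<noteq> 0}"
    and u01: "\<forall>i. u i \<in> {0..1}"
begin

abbreviation "NN \<equiv> {i. p i \<noteq> 0}"
abbreviation "s0 \<equiv> 1 - (\<Sum>i\<in>NN. p i)"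
abbreviation "Fm z \<equiv> s0 * z + (\<Sum>i\<in>NN. if u i < z then p i else 0)"

lemma sum_eq: "(\<Sum>i. p i) = (\<Sum>i\<in>NN. p i)"
  by (rule suminf_finite[OF finN]) auto

lemma s0_ge: "s0 \<ge> 0" using ps sum_eq by simp

lemma f_eq: "bridge p u y = s0 * y + (\<Sum>i\<in>NN. if u i \<le> y then p i else 0)"
proof -
  have "(\<Sum>i. p i * indicator {..y} (u i)) = (\<Sum>i\<in>NN. p i * indicator {..y} (u i))"
    by (rule suminf_finite[OF finN]) auto
  also have "\<dots> = (\<Sum>i\<in>NN. if u i \<le> y then p i else 0)"
    by (rule sum.cong) (auto simp: indicator_def)
  finally show ?thesis unfolding bridge_def sum_eq by simp
qed

lemma f1: "bridge p u 1 = 1"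
  using u01 by (simp add: f_eq)

lemma f_mono: "y \<le> z \<Longrightarrow> bridge p u y \<le> bridge p u z"
  unfolding f_eq using s0_ge p0
  by (intro add_mono mult_left_mono sum_mono) auto

lemma f_lip: "y \<le> z \<Longrightarrow> bridge p u z - bridge p u y \<ge> s0 * (z - y)"
proof -
  assume "y \<le> z"
  have "(\<Sum>i\<in>NN. if u i \<le> y then p i else 0) \<le> (\<Sum>i\<in>NN. if u i \<le> z then p i else 0)"
    using p0 \<open>y \<le> z\<close> by (intro sum_mono) auto
  then show ?thesis unfolding f_eq by (simp add: algebra_simps)
qed

lemma Fm_le: "w < z \<Longrightarrow> bridge p u w \<le> Fm z"
  unfolding f_eq using s0_ge p0
  by (intro add_mono mult_left_mono sum_mono) auto

lemma Fm_le_f: "Fm z \<le> bridge p u z"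
  unfolding f_eq using s0_ge p0
  by (intro add_mono sum_mono) auto

lemma Fm_nonneg: "z \<ge> 0 \<Longrightarrow> Fm z \<ge> 0"
  using s0_ge p0 by (intro add_nonneg_nonneg sum_nonneg) auto

lemma f_le1: "z \<le> 1 \<Longrightarrow> bridge p u z \<le> 1"
  using f_mono[of z 1] f1 by simp

lemma gen_inv_char:
  assumes y: "0 \<le> y" "y < 1"
  defines "z \<equiv> gen_inv (bridge p u) y"
  shows "z \<in> {0..1}" "Fm z \<le> y" "y \<le> bridge p u z"
proof -
  define S where "S = {w\<in>{0..1}. bridge p u w > y}"
  have z: "z = Inf S" unfolding z_def gen_inv_def S_def ..
  have "1 \<in> S" using f1 y unfolding S_def by auto
  have bdd: "bdd_below S" unfolding S_def by (auto intro: bdd_belowI[of _ 0])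
  have z1: "z \<le> 1" unfolding z using \<open>1 \<in> S\<close> bdd by (rule cInf_lower)
  have z0: "z \<ge> 0" unfolding z using \<open>1 \<in> S\<close> by (intro cInf_greatest) (auto simp: S_def)
  show "z \<in> {0..1}" using z0 z1 by auto
  have finU: "finite (u ` NN)" using finN by auto
  show "y \<le> bridge p u z"
  proof (rule ccontr)
    assume "\<not> y \<le> bridge p u z"
    then have lt: "bridge p u z < y" by simp
    obtain d where d: "d > 0" "\<forall>a\<in>u ` NN. a > z \<longrightarrow> a > z + d"
      using gap_right[OF finU] by blast
    define e where "e = min d ((y - bridge p u z) / (s0 + 1))"
    have e0: "e > 0" using d lt s0_ge by (auto simp: e_def)
    have s0e: "s0 * e < y - bridge p u z"
    proof -
      have "s0 * e \<le> s0 * ((y - bridge p u z) / (s0 + 1))"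
        using s0_ge by (intro mult_left_mono) (auto simp: e_def)
      also have "\<dots> < y - bridge p u z"
        using s0_ge lt by (simp add: field_simps)
      finally show ?thesis .
    qed
    have "z + e \<le> Inf S"
    proof (rule cInf_greatest)
      show "S \<noteq> {}" using \<open>1 \<in> S\<close> by auto
    next
      fix w assume w: "w \<in> S"
      have wz: "z \<le> w" unfolding z using w bdd by (rule cInf_lower)
      show "z + e \<le> w"
      proof (rule ccontr)
        assume "\<not> z + e \<le> w"
        then have wl: "w < z + e" by simp
        have eq: "\<And>i. i \<in> NN \<Longrightarrow> (u i \<le> w) = (u i \<le> z)"
        proof -
          fix i assume i: "i \<in> NN"
          show "(u i \<le> w) = (u i \<le> z)"
          proof (cases "u i > z")
            case True
            then have "u i > z + d" using d i by auto
            then show ?thesis using True wl by (auto simp: e_def)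
          next
            case False then show ?thesis using wz by auto
          qed
        qed
        have "bridge p u w = s0 * w + (\<Sum>i\<in>NN. if u i \<le> z then p i else 0)"
          unfolding f_eq by (intro arg_cong2[where f="(+)"] refl sum.cong) (auto simp: eq)
        also have "\<dots> = bridge p u z + s0 * (w - z)" unfolding f_eq by (simp add: algebra_simps)
        also have "\<dots> \<le> bridge p u z + s0 * e"
          using s0_ge wl by (intro add_left_mono mult_left_mono) auto
        also have "\<dots> < y" using s0e by simp
        finally show False using w by (auto simp: S_def)
      qed
    qed
    then show False using e0 z by simp
  qed
  show "Fm z \<le> y"
  proof (cases "z = 0")
    case True
    have "Fm z = 0" using True u01 by (auto intro: sum.neutral simp: not_less)
    then show ?thesis using y by simp
  next
    case False
    then have zp: "z > 0" using z0 by simp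
    show ?thesis
    proof (rule ccontr)
      assume "\<not> Fm z \<le> y"
      then have lt: "y < Fm z" by simp
      obtain d where d: "d > 0" "\<forall>a\<in>u ` NN. a < z \<longrightarrow> a < z - d"
        using gap_left[OF finU] by blast
      define e where "e = min (min d (z/2)) ((Fm z - y) / (s0 + 1))"
      have e0: "e > 0" using d lt s0_ge zp by (auto simp: e_def)
      have s0e: "s0 * e < Fm z - y"
      proof -
        have "s0 * e \<le> s0 * ((Fm z - y) / (s0 + 1))"
          using s0_ge by (intro mult_left_mono) (auto simp: e_def)
        also have "\<dots> < Fm z - y"
          using s0_ge lt by (simp add: field_simps)
        finally show ?thesis .
      qed
      define w where "w = z - e"
      have w01: "w \<in> {0..1}" using z1 e0 by (auto simp: w_def e_def)
      have eq: "\<And>i. i \<in> NN \<Longrightarrow> (u i \<le> w) = (u i < z)"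
      proof -
        fix i assume i: "i \<in> NN"
        show "(u i \<le> w) = (u i < z)"
        proof (cases "u i < z")
          case True
          then have "u i < z - d" using d i by auto
          then show ?thesis using True by (auto simp: e_def w_def)
        next
          case False then show ?thesis using e0 by (auto simp: w_def)
        qed
      qed
      have "bridge p u w = s0 * w + (\<Sum>i\<in>NN. if u i < z then p i else 0)"
        unfolding f_eq by (intro arg_cong2[where f="(+)"] refl sum.cong) (auto simp: eq)
      also have "\<dots> = Fm z - s0 * e" by (simp add: w_def algebra_simps)
      finally have "bridge p u w > y" using s0e by simp
      then have "w \<in> S" using w01 by (auto simp: S_def)
      then have "z \<le> w" unfolding z using bdd by (rule cInf_lower)
      then show False using e0 by (simp add: w_def)
    qed
  qed
qed

lemma gen_inv_eqI:
  assumes z: "z \<in> {0..1}" and y: "Fm z \<le> y" "y < bridge p u z"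
  shows "gen_inv (bridge p u) y = z"
  unfolding gen_inv_def
proof (rule cInf_eq_minimum)
  show "z \<in> {w \<in> {0..1}. y < bridge p u w}" using z y by auto
next
  fix w assume w: "w \<in> {w \<in> {0..1}. y < bridge p u w}"
  show "z \<le> w"
  proof (rule ccontr)
    assume "\<not> z \<le> w"
    then have "bridge p u w \<le> Fm z" by (intro Fm_le) auto
    then show False using w y by auto
  qed
qed

lemma llip_eq: "llip (bridge p u) = s0"
  unfolding llip_def
proof (rule cSup_eq_maximum)
  show "s0 \<in> {\<kappa>. 0 \<le> \<kappa> \<and> (\<forall>y\<in>{0..1}. \<forall>z\<in>{0..1}. \<kappa> * \<bar>y - z\<bar> \<le> \<bar>bridge p u y - bridge p u z\<bar>)}"
  proof (intro CollectI conjI ballI s0_ge)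
    fix y z :: real
    show "s0 * \<bar>y - z\<bar> \<le> \<bar>bridge p u y - bridge p u z\<bar>"
    proof (cases "y \<le> z")
      case True
      then show ?thesis using f_lip[OF True] s0_ge by (simp add: abs_if)
    next
      case False
      then have "z \<le> y" by simp
      then show ?thesis using f_lip[OF \<open>z \<le> y\<close>] s0_ge by (simp add: abs_if)
    qed
  qed
next
  fix k assume "k \<in> {\<kappa>. 0 \<le> \<kappa> \<and> (\<forall>y\<in>{0..1}. \<forall>z\<in>{0..1}. \<kappa> * \<bar>y - z\<bar> \<le> \<bar>bridge p u y - bridge p u z\<bar>)}"
  then have k: "\<And>y z. y \<in> {0..1} \<Longrightarrow> z \<in> {0..1} \<Longrightarrow> k * \<bar>y - z\<bar> \<le> \<bar>bridge p u y - bridge p u z\<bar>"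
    by auto
  have finU: "finite (u ` NN)" using finN by auto
  obtain d where d: "d > 0" "\<forall>a\<in>u ` NN. a > 0 \<longrightarrow> a > 0 + d"
    using gap_right[OF finU] by blast
  define w where "w = min d 1"
  have w: "w > 0" "w \<le> 1" "w \<le> d" using d by (auto simp: w_def)
  have eq: "(u i \<le> w) = (u i \<le> 0)" if i: "i \<in> NN" for i
  proof -
    have "u i > 0 \<Longrightarrow> u i > d" using d i by auto
    then show ?thesis using w by (cases "u i > 0") auto
  qed
  have "bridge p u w = s0 * w + (\<Sum>i\<in>NN. if u i \<le> 0 then p i else 0)"
    unfolding f_eq by (intro arg_cong2[where f="(+)"] refl sum.cong) (auto simp: eq)
  also have "\<dots> = bridge p u 0 + s0 * w" unfolding f_eq by simp
  finally have "bridge p u w - bridge p u 0 = s0 * w" by simp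
  with k[of w 0] w s0_ge have "k * w \<le> s0 * w" by simp
  then show "k \<le> s0" using w by simp
qed

lemma J_eq: "bridge p u z - Fm z = (\<Sum>i\<in>NN. if u i = z then p i else 0)"
proof -
  have "bridge p u z - Fm z = (\<Sum>i\<in>NN. (if u i \<le> z then p i else 0) - (if u i < z then p i else 0))"
    unfolding f_eq by (simp add: sum_subtractf)
  also have "\<dots> = (\<Sum>i\<in>NN. if u i = z then p i else 0)"
    by (rule sum.cong) auto
  finally show ?thesis .
qed


context
  fixes v :: "nat \<Rightarrow> real"
  assumes H: "\<forall>q\<in>\<rat>. (\<lambda>k. cnt v {..<q} k) \<longlonglongrightarrow> max 0 (min q 1)"
    and v01: "\<forall>j. v j \<in> {0..<1}"
begin

lemma dust_eq: "dust (paintbox_partition (bridge p u) v) = s0"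
proof -
  define g where "g = gen_inv (bridge p u)"
  define Z where "Z = (\<lambda>i. g (v i)) ` {1..}"
  define Bl where "Bl z = {j. j \<ge> 1 \<and> g (v j) = z}" for z
  define J where "J z = (\<Sum>i\<in>NN. if u i = z then p i else 0)" for z
  have P: "paintbox_partition (bridge p u) v = Bl ` Z"
    unfolding paintbox_partition_def Bl_def Z_def g_def by auto
  have char: "g (v j) \<in> {0..1}" "Fm (g (v j)) \<le> v j" "v j \<le> bridge p u (g (v j))" for j
    using gen_inv_char[of "v j"] v01 unfolding g_def by auto
  have Z01: "z \<in> {0..1}" if "z \<in> Z" for z using that char unfolding Z_def by auto
  have eqI: "g (v j) = z" if "z \<in> {0..1}" "v j \<in> {Fm z..<bridge p u z}" for z j
    using gen_inv_eqI[of z "v j"] that unfolding g_def by auto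
  have lim: "(\<lambda>k. real (card (T \<inter> {1..k})) / real k) \<longlonglongrightarrow> J z"
    if z: "z \<in> {0..1}" and T1: "{j. j \<ge> 1 \<and> v j \<in> {Fm z..<bridge p u z}} \<subseteq> T"
      and T2: "T \<subseteq> {j. v j \<in> {Fm z..bridge p u z}}" for z T
  proof -
    have "(\<lambda>k. real (card (T \<inter> {1..k})) / real k) \<longlonglongrightarrow> bridge p u z - Fm z"
      by (rule freq_interval[OF H Fm_nonneg Fm_le_f f_le1 T1 T2]) (use z in auto)
    then show ?thesis unfolding J_eq J_def .
  qed
  have freq: "asym_freq (Bl z) = J z" if z: "z \<in> Z" for z
  proof -
    have "(\<lambda>k. real (card (Bl z \<inter> {1..k})) / real k) \<longlonglongrightarrow> J z"
    proof (rule lim[OF Z01[OF z]])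
      show "{j. j \<ge> 1 \<and> v j \<in> {Fm z..<bridge p u z}} \<subseteq> Bl z"
        using eqI[OF Z01[OF z]] unfolding Bl_def by auto
      show "Bl z \<subseteq> {j. v j \<in> {Fm z..bridge p u z}}"
        using char unfolding Bl_def by fastforce
    qed
    then show ?thesis unfolding asym_freq_def by (rule limI)
  qed
  have inj: "inj_on Bl Z"
  proof (rule inj_onI)
    fix z z' assume z: "z \<in> Z" "z' \<in> Z" "Bl z = Bl z'"
    then obtain i where i: "i \<ge> 1" "z = g (v i)" unfolding Z_def by auto
    then have "i \<in> Bl z" unfolding Bl_def by auto
    then have "i \<in> Bl z'" using z by simp
    then show "z = z'" using i unfolding Bl_def by auto
  qed
  have J0: "J z \<ge> 0" for z unfolding J_def using p0 by (intro sum_nonneg) auto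
  have "infsum asym_freq (Bl ` Z) = infsum (asym_freq \<circ> Bl) Z"
    by (rule infsum_reindex[OF inj])
  also have "\<dots> = infsum J (u ` NN)"
  proof (rule infsum_cong_neutral)
    fix x assume x: "x \<in> u ` NN - Z"
    show "J x = 0"
    proof (rule ccontr)
      assume "J x \<noteq> 0"
      then have Jp: "J x > 0" using J0[of x] by simp
      have x01: "x \<in> {0..1}" using x u01 by auto
      define T where "T = {j. j \<ge> 1 \<and> v j \<in> {Fm x..<bridge p u x}}"
      have l: "(\<lambda>k. real (card (T \<inter> {1..k})) / real k) \<longlonglongrightarrow> J x"
        by (rule lim[OF x01]) (auto simp: T_def)
      show False
      proof (cases "T = {}")
        case True
        then have "(\<lambda>k. real (card (T \<inter> {1..k})) / real k) \<longlonglongrightarrow> 0" by simp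
        then have "J x = 0" using l LIMSEQ_unique by blast
        then show False using Jp by simp
      next
        case False
        then obtain j where j: "j \<in> T" by auto
        then have "g (v j) = x" using eqI[OF x01] unfolding T_def by auto
        then have "x \<in> Z" using j unfolding Z_def T_def by auto
        then show False using x by auto
      qed
    qed
  next
    fix x assume x: "x \<in> Z - u ` NN"
    then have "J x = 0" unfolding J_def by (intro sum.neutral) auto
    then show "(asym_freq \<circ> Bl) x = 0" using freq x by simp
  next
    fix x assume "x \<in> Z \<inter> u ` NN"
    then show "(asym_freq \<circ> Bl) x = J x" using freq by simp
  qed
  also have "\<dots> = sum J (u ` NN)" using finN by simp
  also have "\<dots> = (\<Sum>i\<in>NN. \<Sum>z\<in>u ` NN. if u i = z then p i else 0)"
    unfolding J_def by (rule sum.swap)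
  also have "\<dots> = (\<Sum>i\<in>NN. p i)"
    using finN by (intro sum.cong refl) (simp add: sum.delta)
  finally show ?thesis unfolding dust_def P by simp
qed

end

end


lemma unif_meas_lt:
  "measure (uniform_measure lborel {0..1::real}) {..<q} = max 0 (min q 1)"
proof -
  have "measure (uniform_measure lborel {0..1::real}) {..<q}
      = measure lborel ({0..1} \<inter> {..<q}) / measure lborel {0..1::real}"
    by (rule measure_uniform_measure) auto
  also have "\<dots> = measure lborel ({0..1} \<inter> {..<q})" by simp
  also have "\<dots> = max 0 (min q 1)"
  proof (cases "q \<le> 0")
    case True
    then have "{0..1} \<inter> {..<q} = ({}::real set)" by auto
    then show ?thesis using True by simp
  next
    case False
    show ?thesis
    proof (cases "q \<le> 1")
      case True
      then have "{0..1} \<inter> {..<q} = {0..<q}" by auto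
      then show ?thesis using True False by simp
    next
      case False2: False
      then have "{0..1} \<inter> {..<q} = {0..1::real}" by auto
      then show ?thesis using False2 by simp
    qed
  qed
  finally show ?thesis .
qed

lemma sum_ind_real: "finite A \<Longrightarrow> (\<Sum>x\<in>A. indicator B x :: real) = real (card (A \<inter> B))"
  by (induction rule: finite_induct) (auto simp: indicator_def Int_insert_left)

lemma slln_ind:
  fixes M :: "'a measure" and W :: "nat + nat \<Rightarrow> 'a \<Rightarrow> real" and q :: real
  assumes P: "prob_space M"
    and indep: "prob_space.indep_vars M (\<lambda>_. borel) W UNIV"
    and dist: "\<forall>j. distr M borel (W (Inr j)) = uniform_measure lborel {0..1}"
  shows "AE \<omega> in M. (\<lambda>k. cnt (\<lambda>j. W (Inr j) \<omega>) {..<q} k) \<longlonglongrightarrow> max 0 (min q 1)"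
proof -
  interpret prob_space M by fact
  have Wm[measurable]: "W k \<in> borel_measurable M" for k using indep unfolding indep_vars_def by auto
  define X where "X k \<omega> = (indicator {..<q} (W k \<omega>) :: real)" for k \<omega>
  define Y where "Y = X (Inr 1)"
  have Xm[measurable]: "X k \<in> borel_measurable M" for k unfolding X_def by measurable
  have Ym[measurable]: "Y \<in> borel_measurable M" unfolding Y_def by measurable
  have indX: "indep_vars (\<lambda>_. borel) X UNIV"
    using indep_vars_compose2[OF indep, of "\<lambda>_. indicator {..<q}" "\<lambda>_. borel"]
    unfolding X_def by simp
  have dX: "distr M borel (X (Inr j)) = distr M borel Y" for j
  proof -
    have "distr M borel (X (Inr j)) = distr (distr M borel (W (Inr j))) borel (indicator {..<q})"
      by (subst distr_distr) (auto simp: X_def[abs_def] comp_def)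
    also have "\<dots> = distr (distr M borel (W (Inr 1))) borel (indicator {..<q})"
      using dist by simp
    also have "\<dots> = distr M borel Y"
      by (subst distr_distr) (auto simp: X_def[abs_def] Y_def comp_def)
    finally show ?thesis .
  qed
  define \<mu> where "\<mu> = max 0 (min q 1)"
  have EY: "expectation Y = \<mu>"
  proof -
    have "expectation Y = integral\<^sup>L (distr M borel (W (Inr 1))) (indicator {..<q})"
      by (subst integral_distr) (auto simp: Y_def X_def[abs_def])
    also have "\<dots> = measure (uniform_measure lborel {0..1::real}) {..<q}"
      using dist by simp
    finally show ?thesis using unif_meas_lt by (simp add: \<mu>_def)
  qed
  have sumX: "(\<Sum>i\<in>Inr ` {1..Suc n}. X i \<omega>) / real (Suc n) = cnt (\<lambda>j. W (Inr j) \<omega>) {..<q} (Suc n)"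
    for n \<omega>
  proof -
    have "(\<Sum>i\<in>Inr ` {1..Suc n}. X i \<omega>) = (\<Sum>j\<in>{1..Suc n}. indicator {j. W (Inr j) \<omega> \<in> {..<q}} j)"
      by (subst sum.reindex) (auto simp: X_def indicator_def)
    also have "\<dots> = real (card ({1..Suc n} \<inter> {j. W (Inr j) \<omega> \<in> {..<q}}))"
      by (rule sum_ind_real) simp
    also have "{1..Suc n} \<inter> {j. W (Inr j) \<omega> \<in> {..<q}} = {j\<in>{1..Suc n}. W (Inr j) \<omega> \<in> {..<q}}"
      by auto
    finally show ?thesis unfolding cnt_def by simp
  qed
  have bound: "prob {\<omega>\<in>space M. \<bar>(\<Sum>i\<in>Inr ` {1..Suc n}. X i \<omega>) / real (Suc n) - \<mu>\<bar> \<ge> \<epsilon>}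
     \<le> 2 * exp (- 2 * real (Suc n) * \<epsilon>\<^sup>2)" if \<epsilon>: "\<epsilon> \<ge> 0" for n \<epsilon>
  proof -
    interpret H: Hoeffding_ineq_iid M "Inr ` {1..Suc n}" X Y 0 1 "expectation Y"
    proof unfold_locales
      show "indep_vars (\<lambda>_. borel) X (Inr ` {1..Suc n})"
        by (rule indep_vars_subset[OF indX]) auto
      show "distr M borel (X i) = distr M borel Y" if "i \<in> Inr ` {1..Suc n}" for i
        using that dX by auto
      show "AE x in M. Y x \<in> {0..1}" by (auto simp: Y_def X_def indicator_def)
    qed auto
    have c: "card (Inr ` {1..Suc n} :: (nat + nat) set) = Suc n"
      by (subst card_image) auto
    show ?thesis
      using H.Hoeffding_ineq_abs_ge'[OF \<epsilon>] unfolding c EY by simp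
  qed
  have ev: "AE \<omega> in M. eventually (\<lambda>n. \<bar>cnt (\<lambda>j. W (Inr j) \<omega>) {..<q} (Suc n) - \<mu>\<bar> < \<epsilon>) sequentially"
    if \<epsilon>: "\<epsilon> > 0" for \<epsilon>
  proof -
    define A where "A n = {\<omega>\<in>space M. \<bar>(\<Sum>i\<in>Inr ` {1..Suc n}. X i \<omega>) / real (Suc n) - \<mu>\<bar> \<ge> \<epsilon>}" for n
    have Am[measurable]: "A n \<in> sets M" for n unfolding A_def by measurable
    have fin: "emeasure M (A n) < \<infinity>" for n by (simp add: less_top[symmetric])
    have summ: "summable (\<lambda>n. measure M (A n))"
    proof (rule summable_comparison_test)
      define r where "r = exp (- 2 * \<epsilon>\<^sup>2)"
      have r: "r \<ge> 0" "r < 1" using \<epsilon> by (auto simp: r_def)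
      show "summable (\<lambda>n. (2 * r) * r ^ n)"
        by (intro summable_mult summable_geometric) (use r in auto)
      have "exp (- 2 * real (Suc n) * \<epsilon>\<^sup>2) = r * r ^ n" for n
      proof -
        have "exp (- 2 * real (Suc n) * \<epsilon>\<^sup>2) = exp (real (Suc n) * (- 2 * \<epsilon>\<^sup>2))"
          by (simp add: algebra_simps)
        also have "\<dots> = r ^ Suc n" unfolding r_def exp_of_nat_mult ..
        finally show ?thesis by simp
      qed
      then show "\<exists>N. \<forall>n\<ge>N. norm (measure M (A n)) \<le> (2 * r) * r ^ n"
        using bound[of \<epsilon>] \<epsilon> unfolding A_def by (intro exI[of _ 0]) (auto simp: mult.assoc)
    qed
    have "AE \<omega> in M. eventually (\<lambda>n. \<omega> \<in> space M - A n) sequentially"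
      by (rule borel_cantelli_AE1[OF Am fin summ])
    then show ?thesis
    proof (rule eventually_mono)
      fix \<omega> assume "eventually (\<lambda>n. \<omega> \<in> space M - A n) sequentially"
      then show "eventually (\<lambda>n. \<bar>cnt (\<lambda>j. W (Inr j) \<omega>) {..<q} (Suc n) - \<mu>\<bar> < \<epsilon>) sequentially"
      proof (rule eventually_mono)
        fix n assume "\<omega> \<in> space M - A n"
        then show "\<bar>cnt (\<lambda>j. W (Inr j) \<omega>) {..<q} (Suc n) - \<mu>\<bar> < \<epsilon>"
          unfolding A_def sumX by auto
      qed
    qed
  qed
  have "AE \<omega> in M. \<forall>m::nat. eventually (\<lambda>n. \<bar>cnt (\<lambda>j. W (Inr j) \<omega>) {..<q} (Suc n) - \<mu>\<bar> < inverse (real (Suc m))) sequentially"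
    unfolding AE_all_countable by (intro allI ev) auto
  then show ?thesis
  proof (rule eventually_mono)
    fix \<omega> assume h: "\<forall>m::nat. eventually (\<lambda>n. \<bar>cnt (\<lambda>j. W (Inr j) \<omega>) {..<q} (Suc n) - \<mu>\<bar> < inverse (real (Suc m))) sequentially"
    have "(\<lambda>n. cnt (\<lambda>j. W (Inr j) \<omega>) {..<q} (Suc n)) \<longlonglongrightarrow> \<mu>"
      unfolding tendsto_iff
    proof (intro allI impI)
      fix e :: real assume e: "e > 0"
      obtain n0 :: nat where n0: "n0 > 0" "inverse (real n0) < e" using ex_inverse_of_nat_less[OF e] by auto
      define m where "m = n0 - 1"
      have m: "inverse (real (Suc m)) < e" using n0 by (simp add: m_def)
      show "eventually (\<lambda>n. dist (cnt (\<lambda>j. W (Inr j) \<omega>) {..<q} (Suc n)) \<mu> < e) sequentially"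
        using h[rule_format, of m] by (rule eventually_mono) (use m in \<open>auto simp: dist_real_def\<close>)
    qed
    then show "(\<lambda>k. cnt (\<lambda>j. W (Inr j) \<omega>) {..<q} k) \<longlonglongrightarrow> max 0 (min q 1)"
      unfolding \<mu>_def by (rule LIMSEQ_imp_Suc)
  qed
qed


theorem lemma6:
  fixes M :: "'a measure" and p :: "nat \<Rightarrow> real" and U V :: "nat \<Rightarrow> 'a \<Rightarrow> real"
  assumes "prob_space M"
    and "decseq p" and "\<forall>i. p i \<ge> 0" and "(\<Sum>i. p i) \<le> 1"
    and "finite {i. p i \<noteq> 0}"
    and "prob_space.indep_vars M (\<lambda>_. borel)
           (\<lambda>k. case k of Inl i \<Rightarrow> U i | Inr i \<Rightarrow> V i) (UNIV :: (nat + nat) set)"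
    and "\<forall>i. distr M borel (U i) = uniform_measure lborel {0..1}"
    and "\<forall>i. distr M borel (V i) = uniform_measure lborel {0..1}"
  shows "AE \<omega> in M. dust (paintbox_partition (bridge p (\<lambda>i. U i \<omega>)) (\<lambda>j. V j \<omega>))
                      = llip (bridge p (\<lambda>i. U i \<omega>))"
proof -
  interpret prob_space M by fact
  define W where "W = (\<lambda>k. case k of Inl i \<Rightarrow> U i | Inr i \<Rightarrow> V i)"
  have indep: "indep_vars (\<lambda>_. borel) W UNIV" using assms(6) unfolding W_def .
  have Wm: "W k \<in> borel_measurable M" for k using indep unfolding indep_vars_def by auto
  have Um[measurable]: "U i \<in> borel_measurable M" for i using Wm[of "Inl i"] by (simp add: W_def)
  have Vm[measurable]: "V i \<in> borel_measurable M" for i using Wm[of "Inr i"] by (simp add: W_def)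
  have AU: "AE \<omega> in M. U i \<omega> \<in> {0..1}" for i
  proof -
    have "AE x in uniform_measure lborel {0..1}. x \<in> {0..1::real}"
      by (rule AE_uniform_measureI) auto
    then have "AE x in distr M borel (U i). x \<in> {0..1}"
      unfolding assms(7)[rule_format, of i] .
    then show ?thesis by (subst (asm) AE_distr_iff) auto
  qed
  have AV: "AE \<omega> in M. V i \<omega> \<in> {0..<1}" for i
  proof -
    have "AE x in lborel. x \<in> {0..1} \<longrightarrow> x \<in> {0..<1::real}"
      using AE_lborel_singleton[of "1::real"] by (rule eventually_mono) auto
    then have "AE x in uniform_measure lborel {0..1}. x \<in> {0..<1::real}"
      by (rule AE_uniform_measureI[rotated]) auto
    then have "AE x in distr M borel (V i). x \<in> {0..<1}"
      unfolding assms(8)[rule_format, of i] .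
    then show ?thesis by (subst (asm) AE_distr_iff) auto
  qed
  have AH: "AE \<omega> in M. \<forall>q\<in>\<rat>. (\<lambda>k. cnt (\<lambda>j. V j \<omega>) {..<q} k) \<longlonglongrightarrow> max 0 (min q 1)"
  proof (subst AE_ball_countable[OF countable_rat], intro ballI)
    fix q :: real
    have "AE \<omega> in M. (\<lambda>k. cnt (\<lambda>j. W (Inr j) \<omega>) {..<q} k) \<longlonglongrightarrow> max 0 (min q 1)"
      by (rule slln_ind[OF assms(1) indep]) (use assms(8) in \<open>simp add: W_def\<close>)
    then show "AE \<omega> in M. (\<lambda>k. cnt (\<lambda>j. V j \<omega>) {..<q} k) \<longlonglongrightarrow> max 0 (min q 1)"
      by (simp add: W_def)
  qed
  have "AE \<omega> in M. (\<forall>i. U i \<omega> \<in> {0..1}) \<and> (\<forall>j. V j \<omega> \<in> {0..<1}) \<and>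
      (\<forall>q\<in>\<rat>. (\<lambda>k. cnt (\<lambda>j. V j \<omega>) {..<q} k) \<longlonglongrightarrow> max 0 (min q 1))"
  proof -
    have AU': "AE \<omega> in M. \<forall>i. U i \<omega> \<in> {0..1}" unfolding AE_all_countable using AU by blast
    have AV': "AE \<omega> in M. \<forall>j. V j \<omega> \<in> {0..<1}" unfolding AE_all_countable using AV by blast
    show ?thesis by (intro eventually_conj AU' AV' AH)
  qed
  then show ?thesis
  proof (rule eventually_mono)
    fix \<omega> assume h: "(\<forall>i. U i \<omega> \<in> {0..1}) \<and> (\<forall>j. V j \<omega> \<in> {0..<1}) \<and>
      (\<forall>q\<in>\<rat>. (\<lambda>k. cnt (\<lambda>j. V j \<omega>) {..<q} k) \<longlonglongrightarrow> max 0 (min q 1))"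
    show "dust (paintbox_partition (bridge p (\<lambda>i. U i \<omega>)) (\<lambda>j. V j \<omega>))
                      = llip (bridge p (\<lambda>i. U i \<omega>))"
      using dust_eq[OF assms(3) assms(4) assms(5), of "\<lambda>i. U i \<omega>" "\<lambda>j. V j \<omega>"]
        llip_eq[OF assms(3) assms(4) assms(5), of "\<lambda>i. U i \<omega>"] h by simp
  qed
qed

end
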